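(* Assume $\Phi$ and $x$ satisfy (P1)–(P4) and (P6) as in the context, let $\delta>0$, $\bar{\mathcal{K}}=\mathcal{K}_{d/2}\setminus X^{-1}(\mathcal{C}_{x,\delta/2})$, and let $r\in(0,d/2]$ and $R_{-1}<\infty$ be such that for every $(t,z_0)\in\bar{\mathcal{K}}$ one has $\bar{\mathcal{B}}_r(z_0)\subset K_d$ and $\sup_{z\in\mathcal{B}_r(z_0)}|J(t,z)^{-1}|\le R_{-1}$. Then there exist $R_3<\infty$, $w_a>0$ and, for each $(t,z_0)\in\bar{\mathcal{K}}$, a matrix $A(t,z_0)\in\mathbb{C}^{n\times n}$ whose imaginary part is symmetric and satisfies $\Im A(t,z_0)\ge w_aI$ (in the sense of quadratic forms), such that for all $(t,z_0)\in\bar{\mathcal{K}}$ and $z\in\mathcal{B}_{r/2}(z_0)$, with $y_0=x(t,z_0)$, $$\Big|\Phi(t,y_0-x(t,z),z)-\Big(\Phi(t,0,z_0)+\tfrac12(z-z_0)^TA(t,z_0)(z-z_0)\Big)\Big|\le R_3|z-z_0|^3.$$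
   Context: Fix $n\ge1$, $T>0$, compact $K_0\subset\mathbb{R}^n$, $d>0$, $\eta\in(0,\infty]$; $K_{d''}=\{z:\operatorname{dist}(z,K_0)\le d''\}$, $\mathcal{K}_{d''}=[0,T]\times K_{d''}$; $J(t,z)=D_zx(t,z)$. Hypotheses: (P1) $x\in C^\infty([0,T]\times\mathbb{R}^n;\mathbb{R}^n)$. (P2) $\Phi\in C^\infty([0,T]\times\mathbb{R}^n\times\mathbb{R}^n;\mathbb{C})$. (P3) $\nabla_y\Phi(t,0,z)$ is real and there is $C>0$ with $|\nabla_y\Phi(t,0,z)-\nabla_y\Phi(t,0,z')|+|x(t,z)-x(t,z')|\ge C|z-z'|$ for $t\in[0,T]$, $z,z'\in K_d$. (P4) There is $w_4>0$ with $\Im\Phi(t,y,z)\ge w_4|y|^2$ for $t\in[0,T]$, $z\in K_d$, $|y|\le2\eta$ (all $y$ if $\eta=\infty$). (P6) $\Phi(t,0,z)$ and $\nabla_y\Phi(t,0,z)$ are real and $J(t,z)^T\nabla_y\Phi(t,0,z)=\nabla_z[\Phi(t,0,z)]$ for all $t\in[0,T]$, $z\in\mathbb{R}^n$. Caustic set $\mathcal{C}_x=\{(t,y)\in[0,T]\times\mathbb{R}^n:\exists z\in K_d\text{ with }y=x(t,z),\ \det J(t,z)=0\}$, $\mathcal{C}_{x,\delta}=\{(t,y):\operatorname{dist}((t,y),\mathcal{C}_x)<\delta\}$; $X(t,z)=(t,x(t,z))$ and $X^{-1}(\mathcal{C}_{x,\delta'})=\{(t,z)\in\mathcal{K}_d:(t,x(t,z))\in\mathcal{C}_{x,\delta'}\}$.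 $\mathcal{B}_r(z)$ is the open ball of radius $r$ about $z$. *)

theory Defs
  imports "HOL-Analysis.Analysis"
begin

fun iter_dderiv :: "'a::real_normed_vector set \<Rightarrow> 'a list \<Rightarrow> ('a \<Rightarrow> 'b::real_normed_vector) \<Rightarrow> 'a \<Rightarrow> 'b" where
  "iter_dderiv S [] f = f"
| "iter_dderiv S (v # vs) f = (\<lambda>p. frechet_derivative (iter_dderiv S vs f) (at p within S) v)"

definition smooth_on :: "'a::real_normed_vector set \<Rightarrow> ('a \<Rightarrow> 'b::real_normed_vector) \<Rightarrow> bool" where
  "smooth_on S f \<longleftrightarrow>
     (\<forall>vs. (\<forall>p\<in>S. iter_dderiv S vs f differentiable (at p within S))
           \<and> continuous_on S (iter_dderiv S vs f))"

text \<open>K_{d''} = {z. dist(z,K0) \<le> d''} (empty if K0 is empty, i.e. dist to empty set = infinity).\<close>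
definition Kset :: "(real^'n) set \<Rightarrow> real \<Rightarrow> (real^'n) set" where
  "Kset K0 d' = {z. K0 \<noteq> {} \<and> infdist z K0 \<le> d'}"

text \<open>J(t,z) = D_z x(t,z), entry (i,j) = d x_i / d z_j.\<close>
definition Jac :: "(real \<Rightarrow> real^'n \<Rightarrow> real^'n) \<Rightarrow> real \<Rightarrow> real^'n \<Rightarrow> real^'n^'n" where
  "Jac x t z = jacobian (x t) (at z)"

definition gradY :: "(real \<Rightarrow> real^'n \<Rightarrow> real^'n \<Rightarrow> complex) \<Rightarrow> real \<Rightarrow> real^'n \<Rightarrow> real^'n \<Rightarrow> complex^'n" where
  "gradY Phi t y z = (\<chi> i. vector_derivative (\<lambda>s. Phi t (y + s *\<^sub>R axis i 1) z) (at 0))"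

definition gradZ :: "(real \<Rightarrow> real^'n \<Rightarrow> real^'n \<Rightarrow> complex) \<Rightarrow> real \<Rightarrow> real^'n \<Rightarrow> real^'n \<Rightarrow> complex^'n" where
  "gradZ Phi t y z = (\<chi> i. vector_derivative (\<lambda>s. Phi t y (z + s *\<^sub>R axis i 1)) (at 0))"

definition Re_vec :: "complex^'n \<Rightarrow> real^'n" where
  "Re_vec v = (\<chi> i. Re (v $ i))"

definition Im_mat :: "complex^'n^'n \<Rightarrow> real^'n^'n" where
  "Im_mat A = (\<chi> i j. Im (A $ i $ j))"

definition caustic :: "(real \<Rightarrow> real^'n \<Rightarrow> real^'n) \<Rightarrow> real \<Rightarrow> (real^'n) set \<Rightarrow> real \<Rightarrow> (real \<times> (real^'n)) set" where
  "caustic x T K0 d = {(t, y). t \<in> {0..T} \<and> (\<exists>z\<in>Kset K0 d. y = x t z \<and> det (Jac x t z) = 0)}"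

definition caustic_nbhd :: "(real \<Rightarrow> real^'n \<Rightarrow> real^'n) \<Rightarrow> real \<Rightarrow> (real^'n) set \<Rightarrow> real \<Rightarrow> real \<Rightarrow> (real \<times> (real^'n)) set" where
  "caustic_nbhd x T K0 d \<delta> = {p. \<exists>q\<in>caustic x T K0 d. dist p q < \<delta>}"

definition X_preimage :: "(real \<Rightarrow> real^'n \<Rightarrow> real^'n) \<Rightarrow> real \<Rightarrow> (real^'n) set \<Rightarrow> real \<Rightarrow> real \<Rightarrow> (real \<times> (real^'n)) set" where
  "X_preimage x T K0 d \<delta>' = {(t, z). t \<in> {0..T} \<and> z \<in> Kset K0 d \<and> (t, x t z) \<in> caustic_nbhd x T K0 d \<delta>'}"

definition cquad :: "real^'n \<Rightarrow> complex^'n^'n \<Rightarrow> complex" where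
  "cquad v A = (\<Sum>i\<in>UNIV. \<Sum>j\<in>UNIV. complex_of_real (v $ i) * A $ i $ j * complex_of_real (v $ j))"

end

theory Submission imports Defs begin

fun Ck :: "nat \<Rightarrow> 'l::topological_space set \<Rightarrow> ('l \<times> real \<Rightarrow> 'b::real_normed_vector) \<Rightarrow> bool" where
  "Ck 0 L \<phi> = continuous_on (L \<times> UNIV) \<phi>"
| "Ck (Suc k) L \<phi> = (continuous_on (L \<times> UNIV) \<phi> \<and>
     (\<exists>\<phi>'. (\<forall>l\<in>L. \<forall>s. ((\<lambda>s. \<phi> (l, s)) has_vector_derivative \<phi>' (l, s)) (at s)) \<and> Ck k L \<phi>'))"

lemma Ck_cont: "Ck k L \<phi> \<Longrightarrow> continuous_on (L \<times> UNIV) \<phi>"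
  by (cases k) auto

lemma Ck_Suc_mono: "Ck (Suc k) L \<phi> \<Longrightarrow> Ck k L \<phi>"
proof (induction k arbitrary: \<phi>)
  case 0 then show ?case by simp
next
  case (Suc k)
  then obtain \<phi>' where "\<forall>l\<in>L. \<forall>s. ((\<lambda>s. \<phi> (l, s)) has_vector_derivative \<phi>' (l, s)) (at s)" "Ck (Suc k) L \<phi>'"
    "continuous_on (L \<times> UNIV) \<phi>" by auto
  with Suc.IH show ?case by auto
qed

lemma Ck_const: "continuous_on L c \<Longrightarrow> Ck k L (\<lambda>x. c (fst x))"
proof (induction k arbitrary: c)
  case 0 then show ?case
    by (auto intro!: continuous_on_compose2[OF 0] continuous_intros)
next
  case (Suc k)
  have "continuous_on (L \<times> UNIV) (\<lambda>x. c (fst x))"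
    by (auto intro!: continuous_on_compose2[OF Suc.prems] continuous_intros)
  moreover have "Ck k L (\<lambda>x. (\<lambda>_. 0::'b) (fst x))" by (rule Suc.IH) simp
  ultimately show ?case by (auto intro!: exI[of _ "\<lambda>_. 0"])
qed

lemma Ck_zero: "Ck k L (\<lambda>x. 0)"
  using Ck_const[of L "\<lambda>_. 0"] by simp

lemma Ck_add: "Ck k L f \<Longrightarrow> Ck k L g \<Longrightarrow> Ck k L (\<lambda>x. f x + g x)"
proof (induction k arbitrary: f g)
  case 0 then show ?case by (auto intro!: continuous_intros)
next
  case (Suc k)
  from Suc.prems obtain f' g' where f': "\<forall>l\<in>L. \<forall>s. ((\<lambda>s. f (l, s)) has_vector_derivative f' (l, s)) (at s)" "Ck k L f'"
    and g': "\<forall>l\<in>L. \<forall>s. ((\<lambda>s. g (l, s)) has_vector_derivative g' (l, s)) (at s)" "Ck k L g'"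
    and c: "continuous_on (L \<times> UNIV) f" "continuous_on (L \<times> UNIV) g" by auto
  show ?case using f' g' c Suc.IH[OF f'(2) g'(2)]
    by (auto intro!: exI[of _ "\<lambda>x. f' x + g' x"] continuous_intros has_vector_derivative_add)
qed

lemma Ck_sum: "finite I \<Longrightarrow> (\<And>i. i \<in> I \<Longrightarrow> Ck k L (f i)) \<Longrightarrow> Ck k L (\<lambda>x. \<Sum>i\<in>I. f i x)"
  by (induction I rule: finite_induct) (auto intro: Ck_add Ck_zero)

lemma Ck_linear: "bounded_linear T \<Longrightarrow> Ck k L f \<Longrightarrow> Ck k L (\<lambda>x. T (f x))"
proof (induction k arbitrary: f)
  case 0 then show ?case using bounded_linear.continuous_on[of T] by auto
next
  case (Suc k)
  from Suc.prems obtain f' where f': "\<forall>l\<in>L. \<forall>s. ((\<lambda>s. f (l, s)) has_vector_derivative f' (l, s)) (at s)" "Ck k L f'"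
    and c: "continuous_on (L \<times> UNIV) f" by auto
  have "continuous_on (L \<times> UNIV) (\<lambda>x. T (f x))"
    using bounded_linear.continuous_on[OF Suc.prems(1) c] .
  moreover have "\<forall>l\<in>L. \<forall>s. ((\<lambda>s. T (f (l, s))) has_vector_derivative T (f' (l, s))) (at s)"
    using f'(1) bounded_linear.has_vector_derivative[OF Suc.prems(1)] by blast
  ultimately show ?case using Suc.IH[OF Suc.prems(1) f'(2)]
    by (auto intro!: exI[of _ "\<lambda>x. T (f' x)"])
qed

lemma Ck_scaleR: "Ck k L f \<Longrightarrow> Ck k L g \<Longrightarrow> Ck k L (\<lambda>x. f x *\<^sub>R g x)"
proof (induction k arbitrary: f g)
  case 0 then show ?case by (auto intro!: continuous_intros)
next
  case (Suc k)
  from Suc.prems obtain f' g' where f': "\<forall>l\<in>L. \<forall>s. ((\<lambda>s. f (l, s)) has_vector_derivative f' (l, s)) (at s)" "Ck k L f'"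
    and g': "\<forall>l\<in>L. \<forall>s. ((\<lambda>s. g (l, s)) has_vector_derivative g' (l, s)) (at s)" "Ck k L g'"
    and c: "continuous_on (L \<times> UNIV) f" "continuous_on (L \<times> UNIV) g" by auto
  have f0: "Ck k L f" "Ck k L g" using Suc.prems Ck_Suc_mono by auto
  have "Ck k L (\<lambda>x. f x *\<^sub>R g' x + f' x *\<^sub>R g x)"
    by (intro Ck_add Suc.IH f0 f' g')
  then show ?case using f' g' c
    by (auto intro!: exI[of _ "\<lambda>x. f x *\<^sub>R g' x + f' x *\<^sub>R g x"] continuous_intros
        has_vector_derivative_scaleR simp: has_real_derivative_iff_has_vector_derivative)
qed

lemma Ck_s: "Ck k L (\<lambda>x. snd x)"
proof (cases k)
  case 0 then show ?thesis by (auto intro!: continuous_intros)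
next
  case (Suc j)
  have "Ck j L (\<lambda>x. (\<lambda>_. 1::real) (fst x))" by (rule Ck_const) simp
  then show ?thesis using Suc by (auto intro!: exI[of _ "\<lambda>_. 1"] continuous_intros)
qed

lemma smooth_diff: "smooth_on S G \<Longrightarrow> p \<in> S \<Longrightarrow> iter_dderiv S ws G differentiable (at p within S)"
  by (simp add: smooth_on_def)

lemma smooth_cont: "smooth_on S G \<Longrightarrow> continuous_on S (iter_dderiv S ws G)"
  by (simp add: smooth_on_def)

lemma smooth_hasd: "smooth_on S G \<Longrightarrow> p \<in> S \<Longrightarrow>
   (iter_dderiv S ws G has_derivative (\<lambda>w. iter_dderiv S (w#ws) G p)) (at p within S)"
  using smooth_diff[of S G p ws] by (simp add: frechet_derivative_works)

lemma dd_lin: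
  fixes G :: "'a::euclidean_space \<Rightarrow> 'b::real_normed_vector"
  assumes "smooth_on S G" "p \<in> S"
  shows "iter_dderiv S (w#ws) G p = (\<Sum>b\<in>Basis. (w \<bullet> b) *\<^sub>R iter_dderiv S (b#ws) G p)"
proof -
  have bl: "bounded_linear (\<lambda>w. iter_dderiv S (w#ws) G p)"
    using smooth_hasd[OF assms] has_derivative_bounded_linear by blast
  have "iter_dderiv S (w#ws) G p = iter_dderiv S ((\<Sum>b\<in>Basis. (w \<bullet> b) *\<^sub>R b)#ws) G p"
    by (simp add: euclidean_representation)
  also have "\<dots> = (\<Sum>b\<in>Basis. (w \<bullet> b) *\<^sub>R iter_dderiv S (b#ws) G p)"
    using bounded_linear.linear[OF bl]
    by (simp add: linear_sum linear_scale)
  finally show ?thesis .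
qed

lemma chain_step:
  fixes G :: "'a::euclidean_space \<Rightarrow> 'b::real_normed_vector"
  assumes "smooth_on S G" "\<forall>s. P s \<in> S" "(P has_vector_derivative P') (at s)"
  shows "((\<lambda>s. iter_dderiv S ws G (P s)) has_vector_derivative iter_dderiv S (P'#ws) G (P s)) (at s)"
proof -
  have "(iter_dderiv S ws G has_derivative (\<lambda>w. iter_dderiv S (w#ws) G (P s))) (at (P s) within P ` UNIV)"
    using smooth_hasd[OF assms(1), of "P s" ws] assms(2) by (auto intro: has_derivative_subset)
  from vector_derivative_diff_chain_within[OF assms(3) this]
  show ?thesis by (simp add: o_def)
qed

lemma Ck_chain:
  fixes G :: "'a::euclidean_space \<Rightarrow> 'b::real_normed_vector"
  assumes G: "smooth_on S G" and PS: "\<forall>l\<in>L. \<forall>s. P (l, s) \<in> S"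
  shows "Ck k L P \<Longrightarrow> Ck k L (\<lambda>x. iter_dderiv S ws G (P x))"
proof (induction k arbitrary: ws)
  case 0
  have "continuous_on (L \<times> UNIV) P" using 0 by simp
  have "continuous_on (L \<times> UNIV) (iter_dderiv S ws G \<circ> P)"
    by (rule continuous_on_compose[OF \<open>continuous_on (L \<times> UNIV) P\<close> continuous_on_subset[OF smooth_cont[OF G]]])
       (use PS in auto)
  then show ?case by (simp add: o_def)
next
  case (Suc k)
  from Suc.prems obtain P' where P': "\<forall>l\<in>L. \<forall>s. ((\<lambda>s. P (l, s)) has_vector_derivative P' (l, s)) (at s)" "Ck k L P'"
    and c: "continuous_on (L \<times> UNIV) P" by auto
  have Pk: "Ck k L P" using Suc.prems Ck_Suc_mono by blast
  have cc: "continuous_on (L \<times> UNIV) (iter_dderiv S ws G \<circ> P)"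
    by (rule continuous_on_compose[OF c continuous_on_subset[OF smooth_cont[OF G]]])
       (use PS in auto)
  have der: "((\<lambda>s. iter_dderiv S ws G (P (l, s))) has_vector_derivative
      (\<Sum>b\<in>Basis. (P' (l,s) \<bullet> b) *\<^sub>R iter_dderiv S (b#ws) G (P (l,s)))) (at s)" if "l \<in> L" for l s
  proof -
    have "((\<lambda>s. iter_dderiv S ws G (P (l, s))) has_vector_derivative iter_dderiv S (P' (l,s)#ws) G (P (l,s))) (at s)"
      using chain_step[OF G, of "\<lambda>s. P (l,s)"] PS P'(1) that by blast
    moreover have "iter_dderiv S (P' (l,s)#ws) G (P (l,s)) = (\<Sum>b\<in>Basis. (P' (l,s) \<bullet> b) *\<^sub>R iter_dderiv S (b#ws) G (P (l,s)))"
      using dd_lin[OF G, of "P (l,s)"] PS that by blast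
    ultimately show ?thesis by simp
  qed
  have "Ck k L (\<lambda>x. \<Sum>b\<in>Basis. (P' x \<bullet> b) *\<^sub>R iter_dderiv S (b#ws) G (P x))"
  proof (rule Ck_sum)
    fix b :: 'a assume "b \<in> Basis"
    have "Ck k L (\<lambda>x. P' x \<bullet> b)" using Ck_linear[OF bounded_linear_inner_left P'(2)] .
    moreover have "Ck k L (\<lambda>x. iter_dderiv S (b#ws) G (P x))" using Suc.IH[OF Pk] .
    ultimately show "Ck k L (\<lambda>x. (P' x \<bullet> b) *\<^sub>R iter_dderiv S (b#ws) G (P x))" by (rule Ck_scaleR)
  qed simp
  then have "\<exists>\<phi>'. (\<forall>l\<in>L. \<forall>s. ((\<lambda>s. iter_dderiv S ws G (P (l, s))) has_vector_derivative \<phi>' (l, s)) (at s)) \<and> Ck k L \<phi>'"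
    using der by (intro exI[of _ "\<lambda>x. \<Sum>b\<in>Basis. (P' x \<bullet> b) *\<^sub>R iter_dderiv S (b#ws) G (P x)"]) auto
  then show ?case using cc by (simp add: o_def)
qed

lemma inner_0_Pair: "((0::real, u) \<bullet> c) = u \<bullet> snd c"
  by (cases c) simp

definition D2 :: "real \<Rightarrow> (real \<Rightarrow> real^'n \<Rightarrow> real^'n) \<Rightarrow> (real \<times> (real^'n)) list \<Rightarrow> real \<times> (real^'n) \<Rightarrow> real^'n" where
  "D2 T x ws = iter_dderiv ({0..T} \<times> UNIV) ws (\<lambda>(t, z). x t z)"

definition D3 :: "real \<Rightarrow> (real \<Rightarrow> real^'n \<Rightarrow> real^'n \<Rightarrow> complex) \<Rightarrow> (real \<times> (real^'n) \<times> (real^'n)) list \<Rightarrow> real \<times> (real^'n) \<times> (real^'n) \<Rightarrow> complex" where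
  "D3 T Phi ws = iter_dderiv ({0..T} \<times> UNIV \<times> UNIV) ws (\<lambda>(t, y, z). Phi t y z)"

definition Wv :: "real \<Rightarrow> (real \<Rightarrow> real^'n \<Rightarrow> real^'n) \<Rightarrow> real \<Rightarrow> real^'n \<Rightarrow> real^'n \<Rightarrow> real \<times> (real^'n) \<times> (real^'n)" where
  "Wv T x t z0 u = (0, - (\<Sum>c\<in>Basis. (u \<bullet> snd c) *\<^sub>R D2 T x [c] (t, z0)), u)"

definition Vv :: "real \<Rightarrow> (real \<Rightarrow> real^'n \<Rightarrow> real^'n) \<Rightarrow> real \<Rightarrow> real^'n \<Rightarrow> real^'n \<Rightarrow> real^'n \<Rightarrow> real \<times> (real^'n) \<times> (real^'n)" where
  "Vv T x t z0 u1 u2 = (0, - (\<Sum>c\<in>Basis. (u1 \<bullet> snd c) *\<^sub>R (\<Sum>e\<in>Basis. (u2 \<bullet> snd e) *\<^sub>R D2 T x [e, c] (t, z0))), 0)"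

definition Bf where
  "Bf T x Phi t z0 u1 u2 = (\<Sum>b\<in>Basis. (Wv T x t z0 u1 \<bullet> b) *\<^sub>R (\<Sum>c\<in>Basis. (Wv T x t z0 u2 \<bullet> c) *\<^sub>R D3 T Phi [c, b] (t, 0, z0))
        + (Vv T x t z0 u1 u2 \<bullet> b) *\<^sub>R D3 T Phi [b] (t, 0, z0))"

definition H1e where
  "H1e T x Phi t z0 u = (\<Sum>b\<in>Basis. (Wv T x t z0 u \<bullet> b) *\<^sub>R D3 T Phi [b] (t, 0, z0))"

lemma explicit_derivs:
  fixes x :: "real \<Rightarrow> real^'n \<Rightarrow> real^'n" and Phi :: "real \<Rightarrow> real^'n \<Rightarrow> real^'n \<Rightarrow> complex"
    and a u :: "real^'n"
  assumes P1: "smooth_on ({0..T} \<times> UNIV) (\<lambda>(t, z). x t z)"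
    and P2: "smooth_on ({0..T} \<times> UNIV \<times> UNIV) (\<lambda>(t, y, z). Phi t y z)"
    and t: "t \<in> {0..T}"
  assumes X1_def: "X1 = (\<lambda>s. \<Sum>c\<in>Basis. (u \<bullet> snd c) *\<^sub>R D2 T x [c] (t, a + s *\<^sub>R u))"
    and X2_def: "X2 = (\<lambda>s. \<Sum>c\<in>Basis. (u \<bullet> snd c) *\<^sub>R (\<Sum>e\<in>Basis. (u \<bullet> snd e) *\<^sub>R D2 T x [e, c] (t, a + s *\<^sub>R u)))"
    and P_def: "P = (\<lambda>s. (t, x t a - x t (a + s *\<^sub>R u), a + s *\<^sub>R u))"
    and P1_def: "P1 = (\<lambda>s. (0::real, - X1 s, u))"
    and P2_def: "P2 = (\<lambda>s. (0::real, - X2 s, 0::real^'n))"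
    and H1_def: "H1 = (\<lambda>s. \<Sum>b\<in>Basis. (P1 s \<bullet> b) *\<^sub>R D3 T Phi [b] (P s))"
    and H2_def: "H2 = (\<lambda>s. \<Sum>b\<in>Basis. (P1 s \<bullet> b) *\<^sub>R (\<Sum>c\<in>Basis. (P1 s \<bullet> c) *\<^sub>R D3 T Phi [c, b] (P s))
        + (P2 s \<bullet> b) *\<^sub>R D3 T Phi [b] (P s))"
  shows "((\<lambda>s. Phi t (x t a - x t (a + s *\<^sub>R u)) (a + s *\<^sub>R u)) has_vector_derivative H1 s) (at s)"
    and "(H1 has_vector_derivative H2 s) (at s)"
    and "H1 0 = H1e T x Phi t a u"
    and "H2 0 = Bf T x Phi t a u u"
proof -
  define S2 where "S2 = {0..T} \<times> (UNIV :: (real^'n) set)"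
  define S3 where "S3 = {0..T} \<times> (UNIV :: (real^'n) set) \<times> (UNIV :: (real^'n) set)"
  define Q where "Q = (\<lambda>s. (t, a + s *\<^sub>R u))"
  have QS: "\<forall>s. Q s \<in> S2" using t by (simp add: Q_def S2_def)
  have PS: "\<forall>s. P s \<in> S3" using t by (simp add: P_def S3_def)
  have Qd: "(Q has_vector_derivative (0, u)) (at s)" for s
    unfolding Q_def by (auto intro!: derivative_eq_intros)
  have P1': "smooth_on S2 (\<lambda>(t, z). x t z)" using P1 by (simp add: S2_def)
  have P2': "smooth_on S3 (\<lambda>(t, y, z). Phi t y z)" using P2 by (simp add: S3_def)
  have dX: "((\<lambda>s. D2 T x ws (Q s)) has_vector_derivative (\<Sum>c\<in>Basis. (u \<bullet> snd c) *\<^sub>R D2 T x (c#ws) (Q s))) (at s)" for ws s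
  proof -
    have "((\<lambda>s. iter_dderiv S2 ws (\<lambda>(t, z). x t z) (Q s)) has_vector_derivative iter_dderiv S2 ((0,u)#ws) (\<lambda>(t, z). x t z) (Q s)) (at s)"
      by (rule chain_step[OF P1' QS Qd])
    then show ?thesis using dd_lin[OF P1', of "Q s" "(0,u)" ws] QS by (simp add: D2_def S2_def inner_0_Pair)
  qed
  have X1d: "(X1 has_vector_derivative X2 s) (at s)" for s
    unfolding X1_def X2_def
    by (intro has_vector_derivative_sum bounded_linear.has_vector_derivative[OF bounded_linear_scaleR_right]
         dX[of "[_]", unfolded Q_def])
  have Pd: "(P has_vector_derivative P1 s) (at s)" for s
  proof -
    have e: "(\<lambda>s. x t (a + s *\<^sub>R u)) = (\<lambda>s. D2 T x [] (Q s))"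
      by (simp add: D2_def Q_def)
    have "((\<lambda>s. x t (a + s *\<^sub>R u)) has_vector_derivative X1 s) (at s)"
      unfolding e X1_def using dX[of "[]" s] by (simp add: Q_def)
    then show ?thesis unfolding P_def P1_def
      by (intro has_vector_derivative_Pair) (auto intro!: derivative_eq_intros)
  qed
  have P1d: "(P1 has_vector_derivative P2 s) (at s)" for s
    unfolding P1_def P2_def
    by (intro has_vector_derivative_Pair) (auto intro!: derivative_eq_intros X1d)
  have dF: "((\<lambda>s. D3 T Phi ws (P s)) has_vector_derivative (\<Sum>b\<in>Basis. (P1 s \<bullet> b) *\<^sub>R D3 T Phi (b#ws) (P s))) (at s)" for ws s
  proof -
    have "((\<lambda>s. iter_dderiv S3 ws (\<lambda>(t, y, z). Phi t y z) (P s)) has_vector_derivative iter_dderiv S3 (P1 s#ws) (\<lambda>(t, y, z). Phi t y z) (P s)) (at s)"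
      by (rule chain_step[OF P2' PS Pd])
    then show ?thesis using dd_lin[OF P2', of "P s" "P1 s" ws] PS by (simp add: D3_def S3_def)
  qed
  have inner_d: "((\<lambda>s. P1 s \<bullet> b) has_field_derivative (P2 s \<bullet> b)) (at s)" for b s
    using bounded_linear.has_vector_derivative[OF bounded_linear_inner_left P1d[of s]]
    by (simp add: has_real_derivative_iff_has_vector_derivative)
  show "(H1 has_vector_derivative H2 s) (at s)"
    unfolding H1_def H2_def
    by (intro has_vector_derivative_sum has_vector_derivative_scaleR inner_d dF[of "[_]"])
  have e0: "(\<lambda>s. Phi t (x t a - x t (a + s *\<^sub>R u)) (a + s *\<^sub>R u)) = (\<lambda>s. D3 T Phi [] (P s))"
    by (simp add: D3_def P_def)
  show "((\<lambda>s. Phi t (x t a - x t (a + s *\<^sub>R u)) (a + s *\<^sub>R u)) has_vector_derivative H1 s) (at s)"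
    unfolding e0 H1_def using dF[of "[]" s] by simp
  show "H1 0 = H1e T x Phi t a u"
    by (simp add: H1_def P1_def X1_def P_def H1e_def Wv_def)
  show "H2 0 = Bf T x Phi t a u u"
    by (simp add: H2_def P1_def X1_def P2_def X2_def P_def Bf_def Wv_def Vv_def)
qed

lemma explicit_derivs_ex:
  fixes x :: "real \<Rightarrow> real^'n \<Rightarrow> real^'n" and Phi :: "real \<Rightarrow> real^'n \<Rightarrow> real^'n \<Rightarrow> complex"
    and a u :: "real^'n"
  assumes P1: "smooth_on ({0..T} \<times> UNIV) (\<lambda>(t, z). x t z)"
    and P2: "smooth_on ({0..T} \<times> UNIV \<times> UNIV) (\<lambda>(t, y, z). Phi t y z)"
    and t: "t \<in> {0..T}"
  shows "\<exists>H1 H2. (\<forall>s. ((\<lambda>s. Phi t (x t a - x t (a + s *\<^sub>R u)) (a + s *\<^sub>R u)) has_vector_derivative H1 s) (at s))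
     \<and> (\<forall>s. (H1 has_vector_derivative H2 s) (at s)) \<and> H1 0 = H1e T x Phi t a u \<and> H2 0 = Bf T x Phi t a u u"
proof -
  note E = explicit_derivs[where a=a and u=u, OF P1 P2 t refl refl refl refl refl refl refl]
  show ?thesis
    apply (rule exI, rule exI, intro conjI allI)
       apply (rule E(1))
      apply (rule E(2))
     apply (rule E(3))
    apply (rule E(4))
    done
qed

lemma Ck_h:
  fixes x :: "real \<Rightarrow> real^'n \<Rightarrow> real^'n" and Phi :: "real \<Rightarrow> real^'n \<Rightarrow> real^'n \<Rightarrow> complex"
  assumes P1: "smooth_on ({0..T} \<times> UNIV) (\<lambda>(t, z). x t z)"
    and P2: "smooth_on ({0..T} \<times> UNIV \<times> UNIV) (\<lambda>(t, y, z). Phi t y z)"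
  shows "Ck k ({0..T} \<times> UNIV \<times> UNIV) (\<lambda>p. Phi (fst (fst p)) (x (fst (fst p)) (fst (snd (fst p)))
      - x (fst (fst p)) (fst (snd (fst p)) + snd p *\<^sub>R snd (snd (fst p)))) (fst (snd (fst p)) + snd p *\<^sub>R snd (snd (fst p))))"
proof -
  define L where "L = {0..T} \<times> (UNIV :: (real^'n) set) \<times> (UNIV :: (real^'n) set)"
  define Q where "Q = (\<lambda>p::(real \<times> (real^'n) \<times> (real^'n)) \<times> real. (fst (fst p), fst (snd (fst p)) + snd p *\<^sub>R snd (snd (fst p))))"
  have "Ck k L (\<lambda>p. (\<lambda>l. (fst l, fst (snd l))) (fst p) + snd p *\<^sub>R (\<lambda>l. (0::real, snd (snd l))) (fst p))"
    by (intro Ck_add Ck_scaleR Ck_s Ck_const continuous_intros)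
  moreover have "(\<lambda>p. (\<lambda>l. (fst l, fst (snd l))) (fst p) + snd p *\<^sub>R (\<lambda>l. (0::real, snd (snd l))) (fst p)) = Q"
    by (auto simp: Q_def)
  ultimately have CQ: "Ck k L Q" by simp
  have QS: "\<forall>l\<in>L. \<forall>s. Q (l, s) \<in> {0..T} \<times> UNIV" by (auto simp: Q_def L_def)
  have CX: "Ck k L (\<lambda>p. iter_dderiv ({0..T} \<times> UNIV) [] (\<lambda>(t, z). x t z) (Q p))"
    by (rule Ck_chain[OF P1 QS CQ])
  have cA: "continuous_on L (\<lambda>l. (fst l, x (fst l) (fst (snd l)), fst (snd l)))"
  proof -
    have "continuous_on L (\<lambda>l. (\<lambda>(t, z). x t z) (fst l, fst (snd l)))"
      by (rule continuous_on_compose2[OF smooth_cont[OF P1, of "[]", simplified]]) (auto simp: L_def intro!: continuous_intros)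
    then show ?thesis by (auto intro!: continuous_intros)
  qed
  define P where "P = (\<lambda>p. (\<lambda>l. (fst l, x (fst l) (fst (snd l)), fst (snd l))) (fst p)
     + (\<lambda>y. (0::real, -y, 0::real^'n)) (iter_dderiv ({0..T} \<times> UNIV) [] (\<lambda>(t, z). x t z) (Q p))
     + snd p *\<^sub>R (\<lambda>l. (0::real, 0::real^'n, snd (snd l))) (fst p))"
  have bl: "bounded_linear (\<lambda>y::real^'n. (0::real, -y, 0::real^'n))"
    by (intro bounded_linear_Pair bounded_linear_zero bounded_linear_minus bounded_linear_ident)
  have CP: "Ck k L P"
    unfolding P_def
    by (intro Ck_add Ck_scaleR Ck_s Ck_const cA Ck_linear[OF bl CX]) (auto intro!: continuous_intros)
  have PS: "\<forall>l\<in>L. \<forall>s. P (l, s) \<in> {0..T} \<times> UNIV \<times> UNIV" by (auto simp: P_def L_def)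
  have "Ck k L (\<lambda>p. iter_dderiv ({0..T} \<times> UNIV \<times> UNIV) [] (\<lambda>(t, y, z). Phi t y z) (P p))"
    by (rule Ck_chain[OF P2 PS CP])
  moreover have "(\<lambda>p. iter_dderiv ({0..T} \<times> UNIV \<times> UNIV) [] (\<lambda>(t, y, z). Phi t y z) (P p)) =
     (\<lambda>p. Phi (fst (fst p)) (x (fst (fst p)) (fst (snd (fst p)))
      - x (fst (fst p)) (fst (snd (fst p)) + snd p *\<^sub>R snd (snd (fst p)))) (fst (snd (fst p)) + snd p *\<^sub>R snd (snd (fst p))))"
    by (auto simp: P_def Q_def)
  ultimately show ?thesis by (simp add: L_def)
qed

lemma taylor3_real:
  fixes f f1 f2 f3 :: "real \<Rightarrow> real"
  assumes d1: "\<And>s. (f has_real_derivative f1 s) (at s)"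
    and d2: "\<And>s. (f1 has_real_derivative f2 s) (at s)"
    and d3: "\<And>s. (f2 has_real_derivative f3 s) (at s)"
    and b: "\<And>s. 0 \<le> s \<Longrightarrow> s \<le> \<sigma> \<Longrightarrow> \<bar>f3 s\<bar> \<le> M" and \<sigma>: "0 < \<sigma>"
  shows "\<bar>f \<sigma> - f 0 - \<sigma> * f1 0 - \<sigma>^2 / 2 * f2 0\<bar> \<le> M / 6 * \<sigma>^3"
proof -
  define diff where "diff = (\<lambda>m::nat. if m = 0 then f else if m = 1 then f1 else if m = 2 then f2 else f3)"
  have "\<forall>m t. m < 3 \<and> 0 \<le> t \<and> t \<le> \<sigma> \<longrightarrow> DERIV (diff m) t :> diff (Suc m) t"
  proof (intro allI impI)
    fix m :: nat and t assume "m < 3 \<and> 0 \<le> t \<and> t \<le> \<sigma>"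
    then have "m = 0 \<or> m = 1 \<or> m = 2" by auto
    then show "DERIV (diff m) t :> diff (Suc m) t" using d1 d2 d3 by (auto simp: diff_def)
  qed
  from Maclaurin[OF \<sigma> _ _ this, of f] obtain t where t: "0 < t" "t < \<sigma>"
    "f \<sigma> = (\<Sum>m<3. diff m 0 / fact m * \<sigma> ^ m) + diff 3 t / fact 3 * \<sigma> ^ 3"
    by (auto simp: diff_def)
  have "f \<sigma> = f 0 + \<sigma> * f1 0 + \<sigma>^2 / 2 * f2 0 + f3 t / 6 * \<sigma>^3"
    using t(3) by (simp add: diff_def eval_nat_numeral fact_numeral algebra_simps)
  then have "f \<sigma> - f 0 - \<sigma> * f1 0 - \<sigma>^2 / 2 * f2 0 = f3 t / 6 * \<sigma>^3" by linarith
  then have "\<bar>f \<sigma> - f 0 - \<sigma> * f1 0 - \<sigma>^2 / 2 * f2 0\<bar> = \<bar>f3 t\<bar> / 6 * \<sigma>^3"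
    using \<sigma> by (simp only: abs_mult abs_divide) simp
  also have "\<dots> \<le> M / 6 * \<sigma>^3"
    using b[of t] t \<sigma> by (intro mult_right_mono divide_right_mono) auto
  finally show ?thesis .
qed

lemma taylor3_complex:
  fixes f f1 f2 f3 :: "real \<Rightarrow> complex"
  assumes d1: "\<And>s. (f has_vector_derivative f1 s) (at s)"
    and d2: "\<And>s. (f1 has_vector_derivative f2 s) (at s)"
    and d3: "\<And>s. (f2 has_vector_derivative f3 s) (at s)"
    and b: "\<And>s. 0 \<le> s \<Longrightarrow> s \<le> \<sigma> \<Longrightarrow> cmod (f3 s) \<le> M" and \<sigma>: "0 \<le> \<sigma>"
  shows "cmod (f \<sigma> - f 0 - \<sigma> *\<^sub>R f1 0 - (\<sigma>^2 / 2) *\<^sub>R f2 0) \<le> M / 3 * \<sigma>^3"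
proof (cases "\<sigma> = 0")
  case True then show ?thesis by simp
next
  case False
  then have \<sigma>': "0 < \<sigma>" using \<sigma> by auto
  have RE: "(g has_vector_derivative g') (at s) \<Longrightarrow> ((\<lambda>s. Re (g s)) has_real_derivative Re g') (at s)" for g g' s
    using bounded_linear.has_vector_derivative[OF bounded_linear_Re]
    by (simp add: has_real_derivative_iff_has_vector_derivative)
  have IM: "(g has_vector_derivative g') (at s) \<Longrightarrow> ((\<lambda>s. Im (g s)) has_real_derivative Im g') (at s)" for g g' s
    using bounded_linear.has_vector_derivative[OF bounded_linear_Im]
    by (simp add: has_real_derivative_iff_has_vector_derivative)
  have r: "\<bar>Re (f \<sigma>) - Re (f 0) - \<sigma> * Re (f1 0) - \<sigma>^2 / 2 * Re (f2 0)\<bar> \<le> M / 6 * \<sigma>^3"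
  proof (rule taylor3_real[of "\<lambda>s. Re (f s)" "\<lambda>s. Re (f1 s)" "\<lambda>s. Re (f2 s)" "\<lambda>s. Re (f3 s)"])
    show "((\<lambda>s. Re (f s)) has_real_derivative Re (f1 s)) (at s)" for s using RE[OF d1] .
    show "((\<lambda>s. Re (f1 s)) has_real_derivative Re (f2 s)) (at s)" for s using RE[OF d2] .
    show "((\<lambda>s. Re (f2 s)) has_real_derivative Re (f3 s)) (at s)" for s using RE[OF d3] .
    show "\<bar>Re (f3 s)\<bar> \<le> M" if "0 \<le> s" "s \<le> \<sigma>" for s using abs_Re_le_cmod[of "f3 s"] b[OF that] by linarith
  qed (rule \<sigma>')
  have i: "\<bar>Im (f \<sigma>) - Im (f 0) - \<sigma> * Im (f1 0) - \<sigma>^2 / 2 * Im (f2 0)\<bar> \<le> M / 6 * \<sigma>^3"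
  proof (rule taylor3_real[of "\<lambda>s. Im (f s)" "\<lambda>s. Im (f1 s)" "\<lambda>s. Im (f2 s)" "\<lambda>s. Im (f3 s)"])
    show "((\<lambda>s. Im (f s)) has_real_derivative Im (f1 s)) (at s)" for s using IM[OF d1] .
    show "((\<lambda>s. Im (f1 s)) has_real_derivative Im (f2 s)) (at s)" for s using IM[OF d2] .
    show "((\<lambda>s. Im (f2 s)) has_real_derivative Im (f3 s)) (at s)" for s using IM[OF d3] .
    show "\<bar>Im (f3 s)\<bar> \<le> M" if "0 \<le> s" "s \<le> \<sigma>" for s using abs_Im_le_cmod[of "f3 s"] b[OF that] by linarith
  qed (rule \<sigma>')
  have "cmod (f \<sigma> - f 0 - \<sigma> *\<^sub>R f1 0 - (\<sigma>^2 / 2) *\<^sub>R f2 0)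
     \<le> \<bar>Re (f \<sigma> - f 0 - \<sigma> *\<^sub>R f1 0 - (\<sigma>^2 / 2) *\<^sub>R f2 0)\<bar> + \<bar>Im (f \<sigma> - f 0 - \<sigma> *\<^sub>R f1 0 - (\<sigma>^2 / 2) *\<^sub>R f2 0)\<bar>"
    by (rule cmod_le)
  also have "\<dots> \<le> M / 6 * \<sigma>^3 + M / 6 * \<sigma>^3"
    using r i by (intro add_mono) simp_all
  finally show ?thesis by simp
qed

lemma taylor_bound:
  fixes x :: "real \<Rightarrow> real^'n \<Rightarrow> real^'n" and Phi :: "real \<Rightarrow> real^'n \<Rightarrow> real^'n \<Rightarrow> complex"
  assumes P1: "smooth_on ({0..T} \<times> UNIV) (\<lambda>(t, z). x t z)"
    and P2: "smooth_on ({0..T} \<times> UNIV \<times> UNIV) (\<lambda>(t, y, z). Phi t y z)"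
    and K: "compact K" "K \<subseteq> {0..T} \<times> UNIV" and rho: "0 \<le> rho"
  shows "\<exists>M. \<forall>t z0 u \<sigma>. (t, z0) \<in> K \<longrightarrow> norm u = 1 \<longrightarrow> 0 \<le> \<sigma> \<longrightarrow> \<sigma> \<le> rho \<longrightarrow>
     cmod (Phi t (x t z0 - x t (z0 + \<sigma> *\<^sub>R u)) (z0 + \<sigma> *\<^sub>R u) - Phi t 0 z0
        - \<sigma> *\<^sub>R H1e T x Phi t z0 u - (\<sigma>^2 / 2) *\<^sub>R Bf T x Phi t z0 u u) \<le> M * \<sigma>^3"
proof -
  define L where "L = {0..T} \<times> (UNIV :: (real^'n) set) \<times> (UNIV :: (real^'n) set)"
  define hh where "hh = (\<lambda>p::(real \<times> (real^'n) \<times> (real^'n)) \<times> real. Phi (fst (fst p)) (x (fst (fst p)) (fst (snd (fst p)))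
      - x (fst (fst p)) (fst (snd (fst p)) + snd p *\<^sub>R snd (snd (fst p)))) (fst (snd (fst p)) + snd p *\<^sub>R snd (snd (fst p))))"
  have "Ck (Suc (Suc (Suc 0))) L hh" using Ck_h[OF P1 P2] by (simp add: L_def hh_def)
  then obtain h1 h2 h3 where
    d1: "\<forall>l\<in>L. \<forall>s. ((\<lambda>s. hh (l,s)) has_vector_derivative h1 (l,s)) (at s)" and
    d2: "\<forall>l\<in>L. \<forall>s. ((\<lambda>s. h1 (l,s)) has_vector_derivative h2 (l,s)) (at s)" and
    d3: "\<forall>l\<in>L. \<forall>s. ((\<lambda>s. h2 (l,s)) has_vector_derivative h3 (l,s)) (at s)" and
    c3: "continuous_on (L \<times> UNIV) h3"
    by auto
  define Kc where "Kc = (\<lambda>p. ((fst (fst p), snd (fst p), fst (snd p)), snd (snd p))) ` (K \<times> (sphere (0::real^'n) 1 \<times> {0..rho}))"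
  have "compact Kc" unfolding Kc_def
    by (intro compact_continuous_image compact_Times K(1) compact_sphere compact_Icc) (auto intro!: continuous_intros)
  moreover have "Kc \<subseteq> L \<times> UNIV" using K(2) by (auto simp: Kc_def L_def)
  ultimately have "compact (h3 ` Kc)"
    by (intro compact_continuous_image continuous_on_subset[OF c3])
  then obtain M0 where M0: "\<forall>y\<in>h3 ` Kc. norm y \<le> M0"
    using compact_imp_bounded bounded_iff by blast
  show ?thesis
  proof (intro exI[of _ "M0/3"] allI impI)
    fix t z0 u \<sigma> assume tz: "(t, z0) \<in> K" and u: "norm (u::real^'n) = 1" and \<sigma>: "0 \<le> \<sigma>" "\<sigma> \<le> rho"
    define l where "l = (t, z0, u)"
    have t: "t \<in> {0..T}" using tz K(2) by auto
    have lL: "l \<in> L" using t by (simp add: l_def L_def)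
    obtain H1 H2 where E: "\<And>s. ((\<lambda>s. Phi t (x t z0 - x t (z0 + s *\<^sub>R u)) (z0 + s *\<^sub>R u)) has_vector_derivative H1 s) (at s)"
      "\<And>s. (H1 has_vector_derivative H2 s) (at s)" "H1 0 = H1e T x Phi t z0 u" "H2 0 = Bf T x Phi t z0 u u"
      using explicit_derivs_ex[OF P1 P2 t, of z0 u] by blast
    have hhl: "(\<lambda>s. hh (l, s)) = (\<lambda>s. Phi t (x t z0 - x t (z0 + s *\<^sub>R u)) (z0 + s *\<^sub>R u))"
      by (simp add: hh_def l_def)
    have h1e: "h1 (l, s) = H1 s" for s
    proof -
      have A: "((\<lambda>s. hh (l,s)) has_vector_derivative h1 (l,s)) (at s)" using d1 lL by blast
      show ?thesis using vector_derivative_unique_at[OF A E(1)[of s, folded hhl]] .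
    qed
    have h2e: "h2 (l, 0) = Bf T x Phi t z0 u u"
    proof -
      have eq: "(\<lambda>s. h1 (l,s)) = H1" using h1e by (rule ext)
      have A: "((\<lambda>s. h1 (l,s)) has_vector_derivative h2 (l,0)) (at 0)" using d2 lL by blast
      show ?thesis using vector_derivative_unique_at[OF A[unfolded eq] E(2)[of 0]] E(4) by simp
    qed
    have h1z: "h1 (l, 0) = H1e T x Phi t z0 u" using h1e E(3) by simp
    have "cmod (hh (l, \<sigma>) - hh (l, 0) - \<sigma> *\<^sub>R h1 (l, 0) - (\<sigma>^2 / 2) *\<^sub>R h2 (l, 0)) \<le> M0 / 3 * \<sigma>^3"
    proof (rule taylor3_complex[of "\<lambda>s. hh (l, s)" "\<lambda>s. h1 (l, s)" "\<lambda>s. h2 (l, s)" "\<lambda>s. h3 (l, s)"])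
      show "((\<lambda>s. hh (l, s)) has_vector_derivative h1 (l, s)) (at s)" for s using d1 lL by blast
      show "((\<lambda>s. h1 (l, s)) has_vector_derivative h2 (l, s)) (at s)" for s using d2 lL by blast
      show "((\<lambda>s. h2 (l, s)) has_vector_derivative h3 (l, s)) (at s)" for s using d3 lL by blast
      show "cmod (h3 (l, s)) \<le> M0" if "0 \<le> s" "s \<le> \<sigma>" for s
      proof -
        have "(l, s) \<in> Kc" unfolding Kc_def l_def
          using tz u that \<sigma> by (intro image_eqI[where x="((t, z0), u, s)"]) auto
        then show ?thesis using M0 by blast
      qed
    qed (rule \<sigma>(1))
    then show "cmod (Phi t (x t z0 - x t (z0 + \<sigma> *\<^sub>R u)) (z0 + \<sigma> *\<^sub>R u) - Phi t 0 z0
        - \<sigma> *\<^sub>R H1e T x Phi t z0 u - (\<sigma>^2 / 2) *\<^sub>R Bf T x Phi t z0 u u) \<le> M0 / 3 * \<sigma>^3"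
      using h1z h2e by (simp add: hh_def l_def)
  qed
qed

lemma Wv_add: "Wv T x t z0 (u + v) = Wv T x t z0 u + Wv T x t z0 v"
  by (simp add: Wv_def inner_add_left scaleR_add_left sum.distrib)

lemma Wv_scale: "Wv T x t z0 (r *\<^sub>R u) = r *\<^sub>R Wv T x t z0 u"
  by (simp add: Wv_def scaleR_sum_right)

lemma Vv_add1: "Vv T x t z0 (u + v) w = Vv T x t z0 u w + Vv T x t z0 v w"
  by (simp add: Vv_def inner_add_left scaleR_add_left sum.distrib)

lemma Vv_scale1: "Vv T x t z0 (r *\<^sub>R u) w = r *\<^sub>R Vv T x t z0 u w"
  by (simp add: Vv_def scaleR_sum_right mult_ac)

lemma Vv_add2: "Vv T x t z0 w (u + v) = Vv T x t z0 w u + Vv T x t z0 w v"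
  by (simp add: Vv_def inner_add_left scaleR_add_left sum.distrib scaleR_add_right)

lemma Vv_scale2: "Vv T x t z0 w (r *\<^sub>R u) = r *\<^sub>R Vv T x t z0 w u"
  by (simp add: Vv_def scaleR_sum_right mult_ac)

lemma Bf_bilinear: "bilinear (Bf T x Phi t z0)"
  unfolding bilinear_def
proof (intro conjI allI)
  fix u1
  show "linear (Bf T x Phi t z0 u1)"
    by (rule linearI) (simp_all add: Bf_def Wv_add Wv_scale Vv_add2 Vv_scale2 inner_add_left scaleR_add_left
         sum.distrib scaleR_sum_right algebra_simps)
next
  fix u2
  show "linear (\<lambda>u1. Bf T x Phi t z0 u1 u2)"
    by (rule linearI) (simp_all add: Bf_def Wv_add Wv_scale Vv_add1 Vv_scale1 inner_add_left scaleR_add_left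
         sum.distrib scaleR_sum_right algebra_simps)
qed

lemma bilinear_expand:
  fixes B :: "real^'n \<Rightarrow> real^'n \<Rightarrow> complex"
  assumes "bilinear B"
  shows "B v v = (\<Sum>i\<in>UNIV. \<Sum>j\<in>UNIV. (v$i * v$j) *\<^sub>R B (axis i 1) (axis j 1))"
proof -
  have v: "v = (\<Sum>i\<in>UNIV. (v$i) *\<^sub>R axis i 1)"
    using basis_expansion[of v] by (simp add: scalar_mult_eq_scaleR)
  have "B v v = B (\<Sum>i\<in>UNIV. (v$i) *\<^sub>R axis i 1) (\<Sum>j\<in>UNIV. (v$j) *\<^sub>R axis j 1)"
    using v by simp
  also have "\<dots> = (\<Sum>(i,j)\<in>UNIV \<times> UNIV. B ((v$i) *\<^sub>R axis i 1) ((v$j) *\<^sub>R axis j 1))"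
    by (rule bilinear_sum[OF assms])
  also have "\<dots> = (\<Sum>(i,j)\<in>UNIV \<times> UNIV. (v$i * v$j) *\<^sub>R B (axis i 1) (axis j 1))"
    by (simp add: bilinear_lmul[OF assms] bilinear_rmul[OF assms] mult.commute)
  also have "\<dots> = (\<Sum>i\<in>UNIV. \<Sum>j\<in>UNIV. (v$i * v$j) *\<^sub>R B (axis i 1) (axis j 1))"
    by (simp add: sum.cartesian_product)
  finally show ?thesis .
qed

lemma cquad_sym:
  fixes B :: "real^'n \<Rightarrow> real^'n \<Rightarrow> complex"
  assumes "bilinear B"
  shows "cquad v (\<chi> i j. (B (axis i 1) (axis j 1) + B (axis j 1) (axis i 1)) / 2) = B v v"
proof -
  have "cquad v (\<chi> i j. (B (axis i 1) (axis j 1) + B (axis j 1) (axis i 1)) / 2)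
     = (\<Sum>i\<in>UNIV. \<Sum>j\<in>UNIV. (v$i * v$j) *\<^sub>R B (axis i 1) (axis j 1)) / 2
       + (\<Sum>i\<in>UNIV. \<Sum>j\<in>UNIV. (v$i * v$j) *\<^sub>R B (axis j 1) (axis i 1)) / 2"
    by (simp add: cquad_def scaleR_conv_of_real sum_divide_distrib sum.distrib[symmetric] algebra_simps add_divide_distrib)
  also have "(\<Sum>i\<in>UNIV. \<Sum>j\<in>UNIV. (v$i * v$j) *\<^sub>R B (axis j 1) (axis i 1))
      = (\<Sum>i\<in>UNIV. \<Sum>j\<in>UNIV. (v$i * v$j) *\<^sub>R B (axis i 1) (axis j 1))"
    by (subst sum.swap) (simp add: mult.commute)
  finally show ?thesis using bilinear_expand[OF assms, of v] by simp
qed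

lemma Im_cquad: "Im (cquad v A) = v \<bullet> (Im_mat A *v v)"
  by (simp add: cquad_def Im_mat_def inner_vec_def matrix_vector_mult_def Im_sum sum_distrib_left mult_ac)

lemma linear_axis_expand:
  fixes f :: "real^'n \<Rightarrow> 'b::real_vector"
  assumes "linear f"
  shows "f a = (\<Sum>i\<in>UNIV. (a$i) *\<^sub>R f (axis i 1))"
proof -
  have "f a = f (\<Sum>i\<in>UNIV. (a$i) *\<^sub>R axis i 1)"
    using basis_expansion[of a] by (simp add: scalar_mult_eq_scaleR)
  also have "\<dots> = (\<Sum>i\<in>UNIV. (a$i) *\<^sub>R f (axis i 1))"
    using assms by (simp add: linear_sum linear_scale)
  finally show ?thesis .
qed

lemma Jac_eq:
  fixes x :: "real \<Rightarrow> real^'n \<Rightarrow> real^'n"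
  assumes P1: "smooth_on ({0..T} \<times> UNIV) (\<lambda>(t, z). x t z)" and t: "t \<in> {0..T}"
  shows "Jac x t z0 *v u = D2 T x [(0, u)] (t, z0)"
proof -
  have d: "((\<lambda>(t, z). x t z) has_derivative (\<lambda>w. D2 T x [w] (t, z0))) (at (t, z0) within ({0..T} \<times> UNIV))"
    using smooth_hasd[OF P1, of "(t, z0)" "[]"] t by (simp add: D2_def)
  have "((\<lambda>(t, z). x t z) \<circ> (\<lambda>z. (t, z)) has_derivative (\<lambda>w. D2 T x [w] (t, z0)) \<circ> (\<lambda>w. (0, w))) (at z0)"
  proof (rule diff_chain_within)
    show "((\<lambda>z. (t, z)) has_derivative (\<lambda>w. (0, w))) (at z0)"
      by (auto intro!: derivative_eq_intros)
    show "((\<lambda>(t, z). x t z) has_derivative (\<lambda>w. D2 T x [w] (t, z0))) (at ((\<lambda>z. (t, z)) z0) within range (\<lambda>z. (t, z)))"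
      using t by (intro has_derivative_subset[OF d]) auto
  qed
  then have hd: "(x t has_derivative (\<lambda>w. D2 T x [(0, w)] (t, z0))) (at z0)" by (simp add: o_def)
  then have "x t differentiable (at z0)" by (auto simp: differentiable_def)
  then have "(x t has_derivative (\<lambda>h. jacobian (x t) (at z0) *v h)) (at z0)"
    by (simp add: jacobian_works)
  from has_derivative_unique[OF this hd] show ?thesis
    by (simp add: Jac_def fun_eq_iff)
qed

lemma H1e_zero:
  fixes x :: "real \<Rightarrow> real^'n \<Rightarrow> real^'n" and Phi :: "real \<Rightarrow> real^'n \<Rightarrow> real^'n \<Rightarrow> complex"
  assumes P1: "smooth_on ({0..T} \<times> UNIV) (\<lambda>(t, z). x t z)"
    and P2: "smooth_on ({0..T} \<times> UNIV \<times> UNIV) (\<lambda>(t, y, z). Phi t y z)"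
    and P6: "\<forall>t\<in>{0..T}. \<forall>z. Im (Phi t 0 z) = 0 \<and> (\<forall>i. Im (gradY Phi t 0 z $ i) = 0) \<and>
              transpose (Jac x t z) *v Re_vec (gradY Phi t 0 z) = Re_vec (gradZ Phi t 0 z)"
    and t: "t \<in> {0..T}"
  shows "H1e T x Phi t z0 u = 0"
proof -
  define S3 where "S3 = {0..T} \<times> (UNIV :: (real^'n) set) \<times> (UNIV :: (real^'n) set)"
  have P2': "smooth_on S3 (\<lambda>(t, y, z). Phi t y z)" using P2 by (simp add: S3_def)
  define dF where "dF = (\<lambda>w. D3 T Phi [w] (t, 0, z0))"
  have bl: "bounded_linear dF"
    using smooth_hasd[OF P2, of "(t, 0, z0)" "[]"] t has_derivative_bounded_linear
    by (auto simp: dF_def D3_def)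
  then have lin: "linear dF" by (rule bounded_linear.linear)
  define J where "J = D2 T x [(0, u)] (t, z0)"
  have W: "Wv T x t z0 u = (0, -J, u)"
    using dd_lin[OF P1, of "(t, z0)" "(0,u)" "[]"] t
    by (simp add: Wv_def J_def D2_def inner_0_Pair)
  have "H1e T x Phi t z0 u = dF (Wv T x t z0 u)"
    using dd_lin[OF P2, of "(t, 0, z0)" "Wv T x t z0 u" "[]"] t
    by (simp add: H1e_def dF_def D3_def)
  also have "\<dots> = dF (0, -J, 0) + dF (0, 0, u)"
    unfolding W using linear_add[OF lin, of "(0, -J, 0)" "(0, 0, u)"] by simp
  finally have H: "H1e T x Phi t z0 u = dF (0, -J, 0) + dF (0, 0, u)" .
  have gY: "gradY Phi t 0 z0 $ i = dF (0, axis i 1, 0)" for i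
  proof -
    have "((\<lambda>s. iter_dderiv S3 [] (\<lambda>(t, y, z). Phi t y z) ((\<lambda>s. (t, s *\<^sub>R axis i 1, z0)) s)) has_vector_derivative
        iter_dderiv S3 [(0, axis i 1, 0)] (\<lambda>(t, y, z). Phi t y z) ((\<lambda>s. (t, s *\<^sub>R axis i 1, z0)) 0)) (at 0)"
      by (rule chain_step[OF P2']) (use t in \<open>auto simp: S3_def intro!: derivative_eq_intros\<close>)
    then have "((\<lambda>s. Phi t (0 + s *\<^sub>R axis i 1) z0) has_vector_derivative dF (0, axis i 1, 0)) (at 0)"
      by (simp add: dF_def D3_def S3_def)
    then show ?thesis by (simp add: gradY_def vector_derivative_at)
  qed
  have gZd: "((\<lambda>s. Phi t 0 (z0 + s *\<^sub>R axis i 1)) has_vector_derivative dF (0, 0, axis i 1)) (at 0)" for i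
  proof -
    have "((\<lambda>s. iter_dderiv S3 [] (\<lambda>(t, y, z). Phi t y z) ((\<lambda>s. (t, 0, z0 + s *\<^sub>R axis i 1)) s)) has_vector_derivative
        iter_dderiv S3 [(0, 0, axis i 1)] (\<lambda>(t, y, z). Phi t y z) ((\<lambda>s. (t, 0, z0 + s *\<^sub>R axis i 1)) 0)) (at 0)"
      by (rule chain_step[OF P2']) (use t in \<open>auto simp: S3_def intro!: derivative_eq_intros\<close>)
    then show ?thesis by (simp add: dF_def D3_def S3_def)
  qed
  have gZ: "gradZ Phi t 0 z0 $ i = dF (0, 0, axis i 1)" for i
    using gZd[of i] by (simp add: gradZ_def vector_derivative_at)
  have ImgZ: "Im (dF (0, 0, axis i 1)) = 0" for i
  proof -
    have "((\<lambda>s. Im (Phi t 0 (z0 + s *\<^sub>R axis i 1))) has_real_derivative Im (dF (0, 0, axis i 1))) (at 0)"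
      using bounded_linear.has_vector_derivative[OF bounded_linear_Im gZd[of i]]
      by (simp add: has_real_derivative_iff_has_vector_derivative)
    moreover have "(\<lambda>s. Im (Phi t 0 (z0 + s *\<^sub>R axis i 1))) = (\<lambda>s. 0)" using P6 t by auto
    ultimately have "((\<lambda>s. 0) has_real_derivative Im (dF (0, 0, axis i 1))) (at 0)" by simp
    then show ?thesis using DERIV_const DERIV_unique by blast
  qed
  have ImgY: "Im (dF (0, axis i 1, 0)) = 0" for i
  proof -
    have "Im (gradY Phi t 0 z0 $ i) = 0" using P6 t by blast
    then show ?thesis using gY[of i] by simp
  qed
  have linY: "linear (\<lambda>a. dF (0, a, 0))"
    by (rule linearI) (simp_all add: linear_add[OF lin, symmetric] linear_scale[OF lin, symmetric])
  have linZ: "linear (\<lambda>a. dF (0, 0, a))"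
    by (rule linearI) (simp_all add: linear_add[OF lin, symmetric] linear_scale[OF lin, symmetric])
  have realY: "dF (0, a, 0) = of_real (a \<bullet> Re_vec (gradY Phi t 0 z0))" for a
  proof -
    have "dF (0, a, 0) = (\<Sum>i\<in>UNIV. (a$i) *\<^sub>R dF (0, axis i 1, 0))"
      by (rule linear_axis_expand[OF linY])
    also have "\<dots> = (\<Sum>i\<in>UNIV. of_real (a$i * Re (dF (0, axis i 1, 0))))"
      by (intro sum.cong refl) (simp add: scaleR_conv_of_real complex_eq_iff ImgY)
    also have "\<dots> = of_real (a \<bullet> Re_vec (gradY Phi t 0 z0))"
      by (simp add: inner_vec_def Re_vec_def gY)
    finally show ?thesis .
  qed
  have realZ: "dF (0, 0, a) = of_real (a \<bullet> Re_vec (gradZ Phi t 0 z0))" for a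
  proof -
    have "dF (0, 0, a) = (\<Sum>i\<in>UNIV. (a$i) *\<^sub>R dF (0, 0, axis i 1))"
      by (rule linear_axis_expand[OF linZ])
    also have "\<dots> = (\<Sum>i\<in>UNIV. of_real (a$i * Re (dF (0, 0, axis i 1))))"
      by (intro sum.cong refl) (simp add: scaleR_conv_of_real complex_eq_iff ImgZ)
    also have "\<dots> = of_real (a \<bullet> Re_vec (gradZ Phi t 0 z0))"
      by (simp add: inner_vec_def Re_vec_def gZ)
    finally show ?thesis .
  qed
  have JJ: "J = Jac x t z0 *v u" using Jac_eq[OF P1 t] by (simp add: J_def)
  have "J \<bullet> Re_vec (gradY Phi t 0 z0) = u \<bullet> Re_vec (gradZ Phi t 0 z0)"
  proof -
    have "J \<bullet> Re_vec (gradY Phi t 0 z0) = Re_vec (gradY Phi t 0 z0) \<bullet> (Jac x t z0 *v u)"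
      by (simp add: JJ inner_commute)
    also have "\<dots> = (Re_vec (gradY Phi t 0 z0) v* Jac x t z0) \<bullet> u"
      by (simp add: dot_lmul_matrix)
    also have "\<dots> = (transpose (Jac x t z0) *v Re_vec (gradY Phi t 0 z0)) \<bullet> u"
      by simp
    also have "\<dots> = u \<bullet> Re_vec (gradZ Phi t 0 z0)"
      using P6 t by (simp add: inner_commute)
    finally show ?thesis .
  qed
  then show ?thesis using H realY[of "-J"] realZ[of u] by simp
qed

lemma Jac_hasd:
  fixes x :: "real \<Rightarrow> real^'n \<Rightarrow> real^'n"
  assumes P1: "smooth_on ({0..T} \<times> UNIV) (\<lambda>(t, z). x t z)" and t: "t \<in> {0..T}"
  shows "(x t has_derivative (\<lambda>h. Jac x t z0 *v h)) (at z0)"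
proof -
  have d: "((\<lambda>(t, z). x t z) has_derivative (\<lambda>w. D2 T x [w] (t, z0))) (at (t, z0) within ({0..T} \<times> UNIV))"
    using smooth_hasd[OF P1, of "(t, z0)" "[]"] t by (simp add: D2_def)
  have "((\<lambda>(t, z). x t z) \<circ> (\<lambda>z. (t, z)) has_derivative (\<lambda>w. D2 T x [w] (t, z0)) \<circ> (\<lambda>w. (0, w))) (at z0)"
  proof (rule diff_chain_within)
    show "((\<lambda>z. (t, z)) has_derivative (\<lambda>w. (0, w))) (at z0)"
      by (auto intro!: derivative_eq_intros)
    show "((\<lambda>(t, z). x t z) has_derivative (\<lambda>w. D2 T x [w] (t, z0))) (at ((\<lambda>z. (t, z)) z0) within range (\<lambda>z. (t, z)))"
      using t by (intro has_derivative_subset[OF d]) auto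
  qed
  then have hd: "(x t has_derivative (\<lambda>w. D2 T x [(0, w)] (t, z0))) (at z0)" by (simp add: o_def)
  then have "x t differentiable (at z0)" by (auto simp: differentiable_def)
  then show ?thesis by (simp add: jacobian_works Jac_def)
qed

lemma cquad_scale: "cquad (s *\<^sub>R v) A = of_real (s^2) * cquad v A"
  by (simp add: cquad_def sum_distrib_left power2_eq_square mult_ac)

lemma matrix_inv_left': "invertible (J::real^'n^'n) \<Longrightarrow> matrix_inv J ** J = mat 1"
  unfolding invertible_def matrix_inv_def by (rule someI2_ex) auto

lemma pos_lemma:
  fixes x :: "real \<Rightarrow> real^'n \<Rightarrow> real^'n" and Phi :: "real \<Rightarrow> real^'n \<Rightarrow> real^'n \<Rightarrow> complex"
    and eta :: ereal and A :: "complex^'n^'n"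
  assumes P1: "smooth_on ({0..T} \<times> UNIV) (\<lambda>(t, z). x t z)" and t: "t \<in> {0..T}"
    and w4: "w4 > 0" and P4: "\<forall>z\<in>KK. \<forall>y. ereal (norm y) \<le> 2 * eta \<longrightarrow> Im (Phi t y z) \<ge> w4 * (norm y)^2"
    and eta: "eta > 0" and r: "r > 0" and cb: "cball z0 r \<subseteq> KK"
    and Im0: "Im (Phi t 0 z0) = 0"
    and cubic: "\<forall>z\<in>ball z0 (r/2). cmod (Phi t (x t z0 - x t z) z - (Phi t 0 z0 + (1/2) * cquad (z - z0) A))
                  \<le> R3 * (norm (z - z0))^3"
    and inv: "invertible (Jac x t z0)" and on: "onorm (\<lambda>v. matrix_inv (Jac x t z0) *v v) \<le> Rm1"
  shows "Im (cquad v A) \<ge> 2 * w4 / (max Rm1 1)^2 * (norm v)^2"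
proof -
  define J where "J = Jac x t z0"
  define Jv where "Jv = J *v v"
  define I where "I = Im (cquad v A)"
  define f where "f = (\<lambda>s::real. x t (z0 + s *\<^sub>R v))"
  define q where "q = (\<lambda>s. (1/s) *\<^sub>R (f s - f 0))"
  have hd: "(x t has_derivative (\<lambda>h. J *v h)) (at z0)" using Jac_hasd[OF P1 t] by (simp add: J_def)
  have fd: "(f has_vector_derivative Jv) (at 0)"
  proof -
    have "((x t) \<circ> (\<lambda>s. z0 + s *\<^sub>R v) has_vector_derivative (\<lambda>h. J *v h) v) (at 0)"
    proof (rule vector_derivative_diff_chain_within[where f="\<lambda>s. z0 + s *\<^sub>R v" and f'=v and g="x t" and g'="\<lambda>h. J *v h"])
      show "((\<lambda>s. z0 + s *\<^sub>R v) has_vector_derivative v) (at 0)"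
        by (auto intro!: derivative_eq_intros)
      show "(x t has_derivative (\<lambda>h. J *v h)) (at (z0 + 0 *\<^sub>R v) within range (\<lambda>s. z0 + s *\<^sub>R v))"
        using hd by (auto intro: has_derivative_subset)
    qed
    then show ?thesis by (simp add: f_def Jv_def o_def)
  qed
  have qlim: "(q \<longlongrightarrow> Jv) (at 0)"
  proof -
    have "((\<lambda>h. norm (f (0 + h) - f 0 - h *\<^sub>R Jv) / norm h) \<longlongrightarrow> 0) (at 0)"
      using fd unfolding has_vector_derivative_def has_derivative_at by blast
    moreover have "eventually (\<lambda>h. norm (f (0 + h) - f 0 - h *\<^sub>R Jv) / norm h = norm (q h - Jv)) (at 0)"
    proof (rule eventually_at_topological[THEN iffD2], intro exI[of _ UNIV] conjI ballI impI)
      fix h :: real assume "h \<noteq> 0"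
      then have "q h - Jv = (1/h) *\<^sub>R (f h - f 0 - h *\<^sub>R Jv)" by (simp add: q_def algebra_simps)
      then show "norm (f (0 + h) - f 0 - h *\<^sub>R Jv) / norm h = norm (q h - Jv)"
        by (simp add: divide_inverse mult.commute)
    qed auto
    ultimately have "((\<lambda>h. norm (q h - Jv)) \<longlongrightarrow> 0) (at 0)" using tendsto_cong by fastforce
    then have "((\<lambda>h. q h - Jv) \<longlongrightarrow> 0) (at 0)" by (rule tendsto_norm_zero_cancel)
    from tendsto_add[OF this tendsto_const[of Jv]] show ?thesis by simp
  qed
  have qlim': "(q \<longlongrightarrow> Jv) (at_right 0)" using qlim by (rule tendsto_mono[OF at_le, rotated]) simp
  define G where "G = (\<lambda>s. w4 * (norm (q s))^2 - R3 * s * (norm v)^3)"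
  have Glim: "(G \<longlongrightarrow> w4 * (norm Jv)^2 - R3 * 0 * (norm v)^3) (at_right 0)"
    unfolding G_def by (intro tendsto_intros qlim' tendsto_ident_at)
  obtain \<epsilon> :: real where \<epsilon>: "\<epsilon> > 0" "ereal \<epsilon> \<le> 2 * eta"
  proof (cases eta)
    case (real e) then show ?thesis using eta that[of "2 * e"] by auto
  next
    case PInf then show ?thesis using that[of 1] by auto
  next
    case MInf then show ?thesis using eta by auto
  qed
  have fcont: "(f \<longlongrightarrow> f 0) (at_right 0)"
    using has_vector_derivative_continuous[OF fd] unfolding isCont_def
    by (rule tendsto_mono[OF at_le, rotated]) simp
  have ev1: "eventually (\<lambda>s. dist (f s) (f 0) < \<epsilon>) (at_right 0)" using tendstoD[OF fcont \<epsilon>(1)] .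
  have ev2: "eventually (\<lambda>s. 0 < s \<and> s * (norm v + 1) < r / 2) (at_right (0::real))"
    unfolding eventually_at_right_field
  proof (intro exI[of _ "r / 2 / (norm v + 1)"] conjI allI impI)
    have "0 < norm v + 1" by (simp add: add_nonneg_pos)
    then show "0 < r / 2 / (norm v + 1)" using r by (intro divide_pos_pos) auto
    fix y :: real assume y: "0 < y" "y < r / 2 / (norm v + 1)"
    have "0 < norm v + 1" by (simp add: add_nonneg_pos)
    then have "y * (norm v + 1) < r / 2" using y(2) by (simp add: pos_less_divide_eq algebra_simps)
    then show "y * (norm v + 1) < r / 2" .
    show "0 < y" by (rule y(1))
  qed
  have ev: "eventually (\<lambda>s. G s \<le> I / 2) (at_right 0)"
    using ev1 ev2
  proof eventually_elim
    case (elim s)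
    then have s: "0 < s" "s * (norm v + 1) < r / 2" and fe: "dist (f s) (f 0) < \<epsilon>" by auto
    define z where "z = z0 + s *\<^sub>R v"
    define y where "y = x t z0 - x t z"
    have "s * norm v \<le> s * (norm v + 1)" using s(1) by (simp add: algebra_simps)
    then have sv: "s * norm v < r / 2" using s(2) by linarith
    have zb: "z \<in> ball z0 (r/2)" using sv s by (simp add: z_def dist_norm)
    have "z \<in> cball z0 r" using zb r by (simp add: dist_commute)
    then have zK: "z \<in> KK" using cb by auto
    have ny: "norm y = norm (f s - f 0)" by (simp add: y_def f_def z_def norm_minus_commute)
    have "norm y < \<epsilon>" using fe ny by (simp add: dist_norm)
    then have "ereal (norm y) \<le> ereal \<epsilon>" by simp
    then have "ereal (norm y) \<le> 2 * eta" using \<epsilon>(2) by (rule order_trans)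
    then have P4': "Im (Phi t y z) \<ge> w4 * (norm y)^2" using P4 zK by blast
    have c: "cmod (Phi t y z - (Phi t 0 z0 + (1/2) * cquad (s *\<^sub>R v) A)) \<le> R3 * (s * norm v)^3"
    proof -
      have c0: "cmod (Phi t y z - (Phi t 0 z0 + (1/2) * cquad (z - z0) A)) \<le> R3 * (norm (z - z0))^3"
        unfolding y_def using cubic zb by blast
      have "z - z0 = s *\<^sub>R v" by (simp add: z_def)
      moreover have "norm (s *\<^sub>R v) = s * norm v" using s by simp
      ultimately show ?thesis using c0 s(1) by simp
    qed
    have "Im (Phi t y z - (Phi t 0 z0 + (1/2) * cquad (s *\<^sub>R v) A)) \<le> R3 * (s * norm v)^3"
      using c abs_Im_le_cmod[of "Phi t y z - (Phi t 0 z0 + (1/2) * cquad (s *\<^sub>R v) A)"] by linarith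
    then have c2: "Im (Phi t y z) - s^2 * (I / 2) \<le> R3 * (s * norm v)^3"
      using Im0 by (simp add: cquad_scale I_def)
    have nq: "norm y = s * norm (q s)"
      using s ny by (simp add: q_def)
    have "w4 * (s * norm (q s))^2 - s^2 * (I / 2) \<le> R3 * (s * norm v)^3"
      using c2 P4' nq by simp
    then have "s^2 * (G s - I / 2) \<le> 0"
      unfolding G_def by (simp add: algebra_simps power2_eq_square power3_eq_cube)
    then show "G s \<le> I / 2"
      using s by (simp add: mult_le_0_iff)
  qed
  have lim_le: "w4 * (norm Jv)^2 \<le> I / 2"
    using tendsto_upperbound[OF Glim ev] by simp
  have vJ: "norm v \<le> Rm1 * norm Jv"
  proof -
    have "v = matrix_inv J *v Jv"
      using matrix_inv_left'[OF inv[folded J_def]] by (simp add: Jv_def matrix_vector_mul_assoc)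
    then have "norm v \<le> onorm (\<lambda>v. matrix_inv J *v v) * norm Jv"
      using onorm[OF matrix_vector_mul_bounded_linear, of "matrix_inv J" Jv] by simp
    also have "\<dots> \<le> Rm1 * norm Jv" using on by (intro mult_right_mono) (auto simp: J_def)
    finally show ?thesis .
  qed
  define Mx where "Mx = max Rm1 1"
  have Mx: "Mx \<ge> 1" by (simp add: Mx_def)
  have "norm v \<le> Mx * norm Jv"
  proof -
    have "Rm1 * norm Jv \<le> Mx * norm Jv" by (intro mult_right_mono) (auto simp: Mx_def)
    then show ?thesis using vJ by linarith
  qed
  then have "(norm v)^2 \<le> (Mx * norm Jv)^2" by (intro power_mono) auto
  then have "(norm v)^2 / Mx^2 \<le> (norm Jv)^2" using Mx by (simp add: field_simps power_mult_distrib)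
  then have "2 * w4 * ((norm v)^2 / Mx^2) \<le> 2 * w4 * (norm Jv)^2" using w4 by (intro mult_left_mono) auto
  then show ?thesis using lim_le by (simp add: I_def Mx_def)
qed

lemma Kset_compact: "compact K0 \<Longrightarrow> e > 0 \<Longrightarrow> compact (Kset K0 e)"
proof (cases "K0 = {}")
  case True then show ?thesis by (simp add: Kset_def)
next
  case False
  assume "compact K0" "e > 0"
  then have "compact {x. infdist x K0 \<le> e}" using compact_infdist_le False by blast
  moreover have "Kset K0 e = {x. infdist x K0 \<le> e}" using False by (simp add: Kset_def)
  ultimately show ?thesis by simp
qed

theorem lemma6p10:
  fixes x :: "real \<Rightarrow> real^'n \<Rightarrow> real^'n"
    and Phi :: "real \<Rightarrow> real^'n \<Rightarrow> real^'n \<Rightarrow> complex"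
    and T d \<delta> r Rm1 :: real and eta :: ereal and K0 :: "(real^'n) set"
  assumes T_pos: "T > 0" and K0: "compact K0" and d_pos: "d > 0" and eta_pos: "eta > 0"
    and P1: "smooth_on ({0..T} \<times> UNIV) (\<lambda>(t, z). x t z)"
    and P2: "smooth_on ({0..T} \<times> UNIV \<times> UNIV) (\<lambda>(t, y, z). Phi t y z)"
    and P3: "\<exists>C>0. (\<forall>t\<in>{0..T}. \<forall>z\<in>Kset K0 d. \<forall>i. Im (gradY Phi t 0 z $ i) = 0) \<and>
              (\<forall>t\<in>{0..T}. \<forall>z\<in>Kset K0 d. \<forall>z'\<in>Kset K0 d.
                 norm (Re_vec (gradY Phi t 0 z) - Re_vec (gradY Phi t 0 z')) + norm (x t z - x t z')
                   \<ge> C * norm (z - z'))"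
    and P4: "\<exists>w4>0. \<forall>t\<in>{0..T}. \<forall>z\<in>Kset K0 d. \<forall>y. ereal (norm y) \<le> 2 * eta \<longrightarrow>
              Im (Phi t y z) \<ge> w4 * (norm y)^2"
    and P6: "\<forall>t\<in>{0..T}. \<forall>z. Im (Phi t 0 z) = 0 \<and> (\<forall>i. Im (gradY Phi t 0 z $ i) = 0) \<and>
              transpose (Jac x t z) *v Re_vec (gradY Phi t 0 z) = Re_vec (gradZ Phi t 0 z)"
    and delta_pos: "\<delta> > 0"
    and r: "0 < r" "r \<le> d / 2"
    and rR: "\<forall>(t, z0) \<in> ({0..T} \<times> Kset K0 (d/2)) - X_preimage x T K0 d (\<delta>/2).
               cball z0 r \<subseteq> Kset K0 d \<and>
               (\<forall>z\<in>ball z0 r. invertible (Jac x t z) \<and>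
                  onorm (\<lambda>v. matrix_inv (Jac x t z) *v v) \<le> Rm1)"
  shows "\<exists>R3::real. \<exists>wa>0. \<exists>A :: real \<Rightarrow> real^'n \<Rightarrow> complex^'n^'n.
           (\<forall>(t, z0) \<in> ({0..T} \<times> Kset K0 (d/2)) - X_preimage x T K0 d (\<delta>/2).
              transpose (Im_mat (A t z0)) = Im_mat (A t z0) \<and>
              (\<forall>v. v \<bullet> (Im_mat (A t z0) *v v) \<ge> wa * (norm v)^2)) \<and>
           (\<forall>(t, z0) \<in> ({0..T} \<times> Kset K0 (d/2)) - X_preimage x T K0 d (\<delta>/2).
              \<forall>z\<in>ball z0 (r/2).
                cmod (Phi t (x t z0 - x t z) z
                      - (Phi t 0 z0 + (1/2) * cquad (z - z0) (A t z0)))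
                  \<le> R3 * (norm (z - z0))^3)"
proof -
  obtain w4 where w4: "w4 > 0" and P4': "\<forall>t\<in>{0..T}. \<forall>z\<in>Kset K0 d. \<forall>y. ereal (norm y) \<le> 2 * eta \<longrightarrow>
              Im (Phi t y z) \<ge> w4 * (norm y)^2" using P4 by blast
  define K where "K = {0..T} \<times> Kset K0 (d/2)"
  define Kbar where "Kbar = ({0..T} \<times> Kset K0 (d/2)) - X_preimage x T K0 d (\<delta>/2)"
  have Kc: "compact K" unfolding K_def using K0 d_pos
    by (intro compact_Times compact_Icc Kset_compact) auto
  have Ks: "K \<subseteq> {0..T} \<times> UNIV" by (auto simp: K_def)
  have KbK: "Kbar \<subseteq> K" by (auto simp: Kbar_def K_def)
  obtain M where M: "\<forall>t z0 u \<sigma>. (t, z0) \<in> K \<longrightarrow> norm u = 1 \<longrightarrow> 0 \<le> \<sigma> \<longrightarrow> \<sigma> \<le> r/2 \<longrightarrow>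
     cmod (Phi t (x t z0 - x t (z0 + \<sigma> *\<^sub>R u)) (z0 + \<sigma> *\<^sub>R u) - Phi t 0 z0
        - \<sigma> *\<^sub>R H1e T x Phi t z0 u - (\<sigma>^2 / 2) *\<^sub>R Bf T x Phi t z0 u u) \<le> M * \<sigma>^3"
    using taylor_bound[OF P1 P2 Kc Ks, of "r/2"] r by auto
  define A where "A = (\<lambda>t z0. (\<chi> i j. (Bf T x Phi t z0 (axis i 1) (axis j 1) + Bf T x Phi t z0 (axis j 1) (axis i 1)) / 2)
     :: complex^'n^'n)"
  have cqA: "cquad v (A t z0) = Bf T x Phi t z0 v v" for t z0 v
    unfolding A_def by (rule cquad_sym[OF Bf_bilinear])
  have cubic: "cmod (Phi t (x t z0 - x t z) z - (Phi t 0 z0 + (1/2) * cquad (z - z0) (A t z0)))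
                  \<le> M * (norm (z - z0))^3" if tz: "(t, z0) \<in> Kbar" and z: "z \<in> ball z0 (r/2)" for t z0 z
  proof (cases "z = z0")
    case True then show ?thesis by (simp add: cquad_def)
  next
    case False
    define \<sigma> where "\<sigma> = norm (z - z0)"
    define u where "u = (1 / \<sigma>) *\<^sub>R (z - z0)"
    have \<sigma>: "\<sigma> > 0" using False by (simp add: \<sigma>_def)
    have u: "norm u = 1" using \<sigma> by (simp add: u_def \<sigma>_def)
    have zu: "z = z0 + \<sigma> *\<^sub>R u" using \<sigma> by (simp add: u_def)
    have \<sigma>r: "\<sigma> \<le> r / 2" using z by (simp add: \<sigma>_def dist_norm norm_minus_commute)
    have t: "t \<in> {0..T}" using tz by (auto simp: Kbar_def)
    have H0: "H1e T x Phi t z0 u = 0" by (rule H1e_zero[OF P1 P2 P6 t])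
    have b: "cmod (Phi t (x t z0 - x t z) z - Phi t 0 z0 - (\<sigma>^2 / 2) *\<^sub>R Bf T x Phi t z0 u u) \<le> M * \<sigma>^3"
    proof -
      have "(t, z0) \<in> K" using tz KbK by blast
      then have "cmod (Phi t (x t z0 - x t (z0 + \<sigma> *\<^sub>R u)) (z0 + \<sigma> *\<^sub>R u) - Phi t 0 z0
        - \<sigma> *\<^sub>R H1e T x Phi t z0 u - (\<sigma>^2 / 2) *\<^sub>R Bf T x Phi t z0 u u) \<le> M * \<sigma>^3"
        using M u \<sigma> \<sigma>r by simp
      then show ?thesis using H0 zu by simp
    qed
    have "cquad (z - z0) (A t z0) = Bf T x Phi t z0 (\<sigma> *\<^sub>R u) (\<sigma> *\<^sub>R u)"
      using cqA zu by simp
    also have "\<dots> = (\<sigma> * \<sigma>) *\<^sub>R Bf T x Phi t z0 u u"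
      by (simp add: bilinear_lmul[OF Bf_bilinear] bilinear_rmul[OF Bf_bilinear])
    finally have "(1/2) * cquad (z - z0) (A t z0) = (\<sigma>^2 / 2) *\<^sub>R Bf T x Phi t z0 u u"
      by (simp add: scaleR_conv_of_real power2_eq_square)
    then show ?thesis using b by (simp add: \<sigma>_def algebra_simps)
  qed
  define wa where "wa = 2 * w4 / (max Rm1 1)^2"
  have wa: "wa > 0" using w4 by (simp add: wa_def)
  have pos: "v \<bullet> (Im_mat (A t z0) *v v) \<ge> wa * (norm v)^2" if tz: "(t, z0) \<in> Kbar" for t z0 v
  proof -
    have t: "t \<in> {0..T}" using tz by (auto simp: Kbar_def)
    have rr: "cball z0 r \<subseteq> Kset K0 d \<and>
               (\<forall>z\<in>ball z0 r. invertible (Jac x t z) \<and> onorm (\<lambda>v. matrix_inv (Jac x t z) *v v) \<le> Rm1)"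
      using rR tz unfolding Kbar_def by blast
    have z0b: "z0 \<in> ball z0 r" using r by simp
    have "Im (cquad v (A t z0)) \<ge> 2 * w4 / (max Rm1 1)^2 * (norm v)^2"
    proof (rule pos_lemma[OF P1 t w4 _ eta_pos r(1)])
      show "\<forall>z\<in>Kset K0 d. \<forall>y. ereal (norm y) \<le> 2 * eta \<longrightarrow> Im (Phi t y z) \<ge> w4 * (norm y)^2"
        using P4' t by blast
      show "cball z0 r \<subseteq> Kset K0 d" using rr by blast
      show "Im (Phi t 0 z0) = 0" using P6 t by blast
      show "\<forall>z\<in>ball z0 (r/2). cmod (Phi t (x t z0 - x t z) z - (Phi t 0 z0 + (1/2) * cquad (z - z0) (A t z0)))
                  \<le> M * (norm (z - z0))^3" using cubic tz by blast
      show "invertible (Jac x t z0)" using rr z0b by blast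
      show "onorm (\<lambda>v. matrix_inv (Jac x t z0) *v v) \<le> Rm1" using rr z0b by blast
    qed
    then show ?thesis by (simp add: Im_cquad wa_def)
  qed
  have sym: "transpose (Im_mat (A t z0)) = Im_mat (A t z0)" for t z0
    by (simp add: Im_mat_def A_def transpose_def vec_eq_iff add.commute)
  show ?thesis
    apply (rule exI[of _ M], rule exI[of _ wa], intro conjI wa, rule exI[of _ A], intro conjI)
    using sym pos cubic unfolding Kbar_def[symmetric] by auto
qed

end
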